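(* Let $m,k,n\ge1$ be integers; let $\lambda_i,\mu_i>0$ ($i\le k$), $\alpha_j,\beta_j,u_j,v_j>0$ ($j\le n$); let $\theta:\{0,\dots,m\}\to\mathbb{R}$ satisfy $0\le\theta\le1$, $\theta(b)>0$ for $b<m$, $\theta(m)=0$. Consider the CTMC on the set $\mathcal{S}$ of vectors $w=(x_1,\dots,x_k;a_1,\dots,a_n)$, $x_i\in\mathbb{Z}_{\ge0}$, $a_j\in\{I,W,T\}$, with $\mathrm{busy}(w)=\sum_i x_i+\sum_j1_{\{a_j=T\}}\le m$, whose only nonzero rates are: $x\to x+e_i$ at rate $\lambda_i\theta(\mathrm{busy}(w))$ and $x+e_i\to x$ at rate $(x_i+1)\mu_i$; and, for each $j$ changing only $a_j$: $I\to W$ at rate $\alpha_j$, $W\to I$ at rate $\beta_j$, $W\to T$ at rate $u_j\theta(\mathrm{busy}(w))$ ($w$ the current state), $T\to W$ at rate $v_j$. Its steady state distribution has the form $p(w)=B\big(\prod_{r=0}^{\mathrm{busy}(w)-1}\theta(r)\big)\big(\prod_{i}\rho_i^{x_i}/x_i!\big)\prod_j(\alpha_j/\beta_j)^{1_{\{a_j=W\}}}(\alpha_ju_j/(\beta_jv_j))^{1_{\{a_j=T\}}}$, $\rho_i=\lambda_i/\mu_i$, for a normalizing constant $B$. Let $\rho=\sum_i\rho_i$, $g=\min[n,m]$ and $\mathrm{i}=\sqrt{-1}$. Define $$C_t=\prod_{j=1}^n\Big[1+\frac{\alpha_j}{\beta_j}+e^{\frac{-2\pi \mathrm{i} t}{n+1}}\frac{\alpha_ju_j}{\beta_jv_j}\Big],\quad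 t\in\{0,\dots,n\},\qquad c_b=\frac{1}{n+1}\sum_{t=0}^nC_te^{\frac{2\pi \mathrm{i} tb}{n+1}},\quad b\in\{0,\dots,g\}.$$ Then $$B=\frac{1}{\sum_{b=0}^g\sum_{x=0}^{m-b}\frac{\rho^x}{x!}\big(\prod_{r=0}^{x+b-1}\theta(r)\big)c_b}.$$ Further, in the special case with no non-persistent users (i.e. $\rho\to0$), the normalizing constant is replaced by $$\tilde B=\frac{1}{\sum_{b=0}^g\big(\prod_{r=0}^{b-1}\theta(r)\big)c_b}.$$
   Context: Multi-channel access model with $m$ channels, $k$ classes of non-persistent users and $n$ persistent users with activity states Idle ($I$), Waiting ($W$), Transmitting ($T$). Empty products $\prod_{r=0}^{-1}\theta(r)$ equal $1$. In the case with no non-persistent users, the steady state probability of persistent configuration $a$ is $\tilde B\big(\prod_{r=0}^{\mathrm{busy}_p(a)-1}\theta(r)\big)\prod_j(\alpha_j/\beta_j)^{1_{\{a_j=W\}}}(\alpha_ju_j/(\beta_jv_j))^{1_{\{a_j=T\}}}$ with $\mathrm{busy}_p(a)=\sum_j1_{\{a_j=T\}}\le m$. *)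

theory Defs
  imports "HOL-Analysis.Analysis"
begin

datatype act = Idle | Waiting | Transmitting

text \<open>A state is a pair (x, a): x i = number of class-i non-persistent users (i < k),
  a j = activity of persistent user j (j < n). Indices outside range are fixed to 0 / Idle.\<close>

definition busy :: "nat \<Rightarrow> nat \<Rightarrow> (nat \<Rightarrow> nat) \<times> (nat \<Rightarrow> act) \<Rightarrow> nat" where
  "busy k n w = (\<Sum>i<k. fst w i) + card {j. j < n \<and> snd w j = Transmitting}"

definition states :: "nat \<Rightarrow> nat \<Rightarrow> nat \<Rightarrow> ((nat \<Rightarrow> nat) \<times> (nat \<Rightarrow> act)) set" where
  "states m k n = {w. (\<forall>i\<ge>k. fst w i = 0) \<and> (\<forall>j\<ge>n. snd w j = Idle) \<and> busy k n w \<le> m}"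

definition weight :: "nat \<Rightarrow> nat \<Rightarrow> (nat \<Rightarrow> real) \<Rightarrow> (nat \<Rightarrow> real) \<Rightarrow> (nat \<Rightarrow> real) \<Rightarrow>
    (nat \<Rightarrow> real) \<Rightarrow> (nat \<Rightarrow> real) \<Rightarrow> (nat \<Rightarrow> real) \<Rightarrow> (nat \<Rightarrow> real) \<Rightarrow>
    (nat \<Rightarrow> nat) \<times> (nat \<Rightarrow> act) \<Rightarrow> real" where
  "weight k n lam mu alpha beta u v theta w =
     (\<Prod>r<busy k n w. theta r) *
     (\<Prod>i<k. (lam i / mu i) ^ fst w i / fact (fst w i)) *
     (\<Prod>j<n. (if snd w j = Waiting then alpha j / beta j
              else if snd w j = Transmitting then alpha j * u j / (beta j * v j) else 1))"

definition C_coef :: "nat \<Rightarrow> (nat \<Rightarrow> real) \<Rightarrow> (nat \<Rightarrow> real) \<Rightarrow> (nat \<Rightarrow> real) \<Rightarrow> (nat \<Rightarrow> real) \<Rightarrow> nat \<Rightarrow> complex" where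
  "C_coef n alpha beta u v t = (\<Prod>j<n. 1 + of_real (alpha j / beta j)
      + exp (- 2 * of_real pi * \<i> * of_nat t / of_nat (n+1)) * of_real (alpha j * u j / (beta j * v j)))"

definition c_coef :: "nat \<Rightarrow> (nat \<Rightarrow> real) \<Rightarrow> (nat \<Rightarrow> real) \<Rightarrow> (nat \<Rightarrow> real) \<Rightarrow> (nat \<Rightarrow> real) \<Rightarrow> nat \<Rightarrow> complex" where
  "c_coef n alpha beta u v b = 1 / of_nat (n+1) *
      (\<Sum>t\<le>n. C_coef n alpha beta u v t * exp (2 * of_real pi * \<i> * of_nat t * of_nat b / of_nat (n+1)))"

end

theory Submission
  imports Defs
begin

definition Aset :: "nat \<Rightarrow> (nat \<Rightarrow> act) set" where
  "Aset n = {a. \<forall>j\<ge>n. a j = Idle}"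
definition tcnt :: "nat \<Rightarrow> (nat \<Rightarrow> act) \<Rightarrow> nat" where
  "tcnt n a = card {j. j < n \<and> a j = Transmitting}"
definition wf :: "(nat \<Rightarrow> real) \<Rightarrow> (nat \<Rightarrow> real) \<Rightarrow> (nat \<Rightarrow> real) \<Rightarrow> (nat \<Rightarrow> real) \<Rightarrow> nat \<Rightarrow> act \<Rightarrow> real" where
  "wf alpha beta u v j s = (if s = Waiting then alpha j / beta j
              else if s = Transmitting then alpha j * u j / (beta j * v j) else 1)"
definition WA where "WA n alpha beta u v a = (\<Prod>j<n. wf alpha beta u v j (a j))"

lemma UNIV_act: "(UNIV :: act set) = {Idle, Waiting, Transmitting}"
  using act.exhaust by auto

lemma finite_act[simp]: "finite (UNIV :: act set)"
  by (simp add: UNIV_act)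

lemma finite_Aset: "finite (Aset n)"
proof -
  have "Aset n = {f. \<forall>x. (x \<in> {..<n} \<longrightarrow> f x \<in> UNIV) \<and> (x \<notin> {..<n} \<longrightarrow> f x = Idle)}"
    unfolding Aset_def by auto
  then show ?thesis using finite_set_of_finite_funs[OF finite_lessThan[of n] finite_act, of Idle] by simp
qed

lemma tcnt_le: "tcnt n a \<le> n"
proof -
  have "tcnt n a \<le> card {..<n}" unfolding tcnt_def by (rule card_mono) auto
  then show ?thesis by simp
qed

lemma expand:
  fixes z :: complex
  shows "(\<Prod>j<n. 1 + of_real (alpha j / beta j) + z * of_real (alpha j * u j / (beta j * v j)))
     = (\<Sum>a\<in>Aset n. of_real (WA n alpha beta u v a) * z ^ tcnt n a)"
proof -
  define F where "F j s = of_real (wf alpha beta u v j s) * (if s = Transmitting then z else 1)" for j s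
  have "(\<Prod>j<n. 1 + of_real (alpha j / beta j) + z * of_real (alpha j * u j / (beta j * v j)))
      = (\<Prod>j<n. \<Sum>s\<in>UNIV. F j s)"
    by (intro prod.cong refl) (simp add: UNIV_act F_def wf_def mult.commute)
  also have "\<dots> = (\<Sum>g\<in>PiE {..<n} (\<lambda>_. UNIV). \<Prod>j<n. F j (g j))"
    by (rule prod_sum_PiE) auto
  also have "\<dots> = (\<Sum>a\<in>Aset n. \<Prod>j<n. F j (a j))"
  proof -
    define h where "h g = (\<lambda>j. if j < n then g j else Idle)" for g :: "nat \<Rightarrow> act"
    have bij: "bij_betw h (PiE {..<n} (\<lambda>_. UNIV)) (Aset n)"
    proof (rule bij_betwI[where g = "\<lambda>a. restrict a {..<n}"])
      show "h \<in> PiE {..<n} (\<lambda>_. UNIV) \<rightarrow> Aset n" by (auto simp: h_def Aset_def)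
      show "(\<lambda>a. restrict a {..<n}) \<in> Aset n \<rightarrow> PiE {..<n} (\<lambda>_. UNIV)" by auto
      show "restrict (h x) {..<n} = x" if "x \<in> PiE {..<n} (\<lambda>_. UNIV)" for x
        using that by (auto simp: h_def PiE_def extensional_def)
      show "h (restrict y {..<n}) = y" if "y \<in> Aset n" for y
        using that by (auto simp: h_def Aset_def)
    qed
    have "(\<Sum>g\<in>PiE {..<n} (\<lambda>_. UNIV). \<Prod>j<n. F j (g j)) = (\<Sum>g\<in>PiE {..<n} (\<lambda>_. UNIV). \<Prod>j<n. F j (h g j))"
      by (intro sum.cong prod.cong refl) (auto simp: h_def)
    also have "\<dots> = (\<Sum>a\<in>Aset n. \<Prod>j<n. F j (a j))"
      by (rule sum.reindex_bij_betw[OF bij])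
    finally show ?thesis .
  qed
  also have "\<dots> = (\<Sum>a\<in>Aset n. of_real (WA n alpha beta u v a) * z ^ tcnt n a)"
  proof (intro sum.cong refl)
    fix a
    have "(\<Prod>j<n. F j (a j)) = of_real (WA n alpha beta u v a) * (\<Prod>j<n. if a j = Transmitting then z else 1)"
      by (simp add: F_def prod.distrib WA_def)
    also have "(\<Prod>j<n. if a j = Transmitting then z else 1) = z ^ tcnt n a"
    proof -
      have "(\<Prod>j<n. if a j = Transmitting then z else 1) = prod (\<lambda>_. z) ({..<n} \<inter> {j. a j = Transmitting})"
        by (simp add: prod.If_cases)
      also have "{..<n} \<inter> {j. a j = Transmitting} = {j. j < n \<and> a j = Transmitting}" by auto
      finally show ?thesis by (simp add: tcnt_def)
    qed
    finally show "(\<Prod>j<n. F j (a j)) = of_real (WA n alpha beta u v a) * z ^ tcnt n a" .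
  qed
  finally show ?thesis .
qed

lemma root_sum:
  fixes n b c :: nat
  assumes "b \<le> n" "c \<le> n"
  shows "(\<Sum>t\<le>n. exp (- 2 * of_real pi * \<i> * of_nat t / of_nat (n+1)) ^ c
            * exp (2 * of_real pi * \<i> * of_nat t * of_nat b / of_nat (n+1)))
         = (if c = b then of_nat (n+1) else 0)"
proof -
  define r where "r = exp (2 * of_real pi * \<i> / of_nat (n+1))"
  have rp: "exp (2 * of_real pi * \<i> * of_nat j / of_nat (n+1)) = r ^ j" for j :: nat
    unfolding r_def by (subst exp_of_nat_mult[symmetric]) (simp add: field_simps)
  have r0: "r \<noteq> 0" unfolding r_def by simp
  have rm: "exp (- 2 * of_real pi * \<i> * of_nat t / of_nat (n+1)) = inverse r ^ t" for t :: nat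
  proof -
    have "exp (- 2 * of_real pi * \<i> * of_nat t / of_nat (n+1)) = inverse (exp (2 * of_real pi * \<i> * of_nat t / of_nat (n+1)))"
      by (simp add: exp_minus[symmetric])
    also have "\<dots> = inverse (r ^ t)" by (simp only: rp)
    finally show ?thesis by (simp add: power_inverse)
  qed
  define s where "s = r ^ b / r ^ c"
  have tm: "exp (- 2 * of_real pi * \<i> * of_nat t / of_nat (n+1)) ^ c
            * exp (2 * of_real pi * \<i> * of_nat t * of_nat b / of_nat (n+1)) = s ^ t" for t :: nat
  proof -
    have e1: "exp (- 2 * of_real pi * \<i> * of_nat t / of_nat (n+1)) ^ c = inverse r ^ (t * c)"
      by (simp only: rm power_mult)
    have e2: "exp (2 * of_real pi * \<i> * of_nat t * of_nat b / of_nat (n+1)) = r ^ (t * b)"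
      using rp[of "t*b"] by (simp add: mult.assoc)
    show ?thesis
      unfolding e1 e2 s_def power_divide
      by (simp add: power_mult[symmetric] power_inverse divide_inverse mult.commute)
  qed
  have "(\<Sum>t\<le>n. exp (- 2 * of_real pi * \<i> * of_nat t / of_nat (n+1)) ^ c
            * exp (2 * of_real pi * \<i> * of_nat t * of_nat b / of_nat (n+1))) = (\<Sum>t<n+1. s ^ t)"
    by (simp only: tm) (simp add: lessThan_Suc_atMost)
  also have "\<dots> = (if c = b then of_nat (n+1) else 0)"
  proof (cases "c = b")
    case True
    then have "s = 1" using r0 by (simp add: s_def)
    then show ?thesis using True by simp
  next
    case False
    have rn: "r ^ (n+1) = 1"
    proof -
      have "r ^ (n+1) = exp (2 * of_real pi * \<i> * of_nat (n+1) / of_nat (n+1))"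
        by (rule rp[symmetric])
      also have "\<dots> = 1" by (rule iffD2[OF complex_root_unity_eq_1]) simp_all
      finally show ?thesis .
    qed
    have "s \<noteq> 1"
    proof
      assume "s = 1"
      then have "r ^ b = r ^ c" using r0 by (simp add: s_def)
      then have "exp (2 * of_real pi * \<i> * of_nat b / of_nat (n+1)) = exp (2 * of_real pi * \<i> * of_nat c / of_nat (n+1))"
        by (simp only: rp)
      then have "b mod (n+1) = c mod (n+1)"
        by (subst (asm) complex_root_unity_eq) simp_all
      then show False using assms False by simp
    qed
    moreover have "s ^ (n+1) = 1"
    proof -
      have "(r^b)^(n+1) = (r^(n+1))^b" "(r^c)^(n+1) = (r^(n+1))^c"
        by (metis power_mult mult.commute)+
      then show ?thesis unfolding s_def power_divide by (simp only: rn power_one) simp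
    qed
    ultimately have "(\<Sum>t<n+1. s^t) = 0" by (subst geometric_sum) simp_all
    then show ?thesis using False by simp
  qed
  finally show ?thesis .
qed

definition qb where "qb n alpha beta u v b = (\<Sum>a\<in>{a\<in>Aset n. tcnt n a = b}. WA n alpha beta u v a)"

lemma c_coef_eq:
  assumes "b \<le> n"
  shows "c_coef n alpha beta u v b = of_real (qb n alpha beta u v b)"
proof -
  define z where "z t = exp (- 2 * of_real pi * \<i> * of_nat t / of_nat (n+1))" for t :: nat
  define e where "e t = exp (2 * of_real pi * \<i> * of_nat t * of_nat b / of_nat (n+1))" for t :: nat
  define W where "W a = complex_of_real (WA n alpha beta u v a)" for a
  have C: "C_coef n alpha beta u v t = (\<Sum>a\<in>Aset n. W a * z t ^ tcnt n a)" for t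
    unfolding C_coef_def z_def W_def by (rule expand)
  have "(\<Sum>t\<le>n. C_coef n alpha beta u v t * e t) = (\<Sum>t\<le>n. \<Sum>a\<in>Aset n. W a * (z t ^ tcnt n a * e t))"
    by (simp add: C sum_distrib_right mult.assoc)
  also have "\<dots> = (\<Sum>a\<in>Aset n. W a * (\<Sum>t\<le>n. z t ^ tcnt n a * e t))"
    by (subst sum.swap) (simp add: sum_distrib_left)
  also have "\<dots> = (\<Sum>a\<in>Aset n. W a * (if tcnt n a = b then of_nat (n+1) else 0))"
    unfolding z_def e_def using assms tcnt_le by (subst root_sum) auto
  finally have 1: "(\<Sum>t\<le>n. C_coef n alpha beta u v t * e t) = of_nat (n+1) * (\<Sum>a\<in>Aset n. if tcnt n a = b then W a else 0)"
    by (simp add: sum_distrib_left if_distrib mult.commute cong: if_cong)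
  have 2: "(\<Sum>a\<in>Aset n. if tcnt n a = b then W a else 0) = of_real (qb n alpha beta u v b)"
    unfolding qb_def W_def of_real_sum by (simp add: sum.inter_filter finite_Aset)
  have "c_coef n alpha beta u v b = 1 / of_nat (n+1) * (\<Sum>t\<le>n. C_coef n alpha beta u v t * e t)"
    unfolding c_coef_def e_def by simp
  also have "\<dots> = of_real (qb n alpha beta u v b)"
    unfolding 1 2 by (simp del: of_nat_Suc)
  finally show ?thesis .
qed

definition Xset :: "nat \<Rightarrow> nat \<Rightarrow> (nat \<Rightarrow> nat) set" where
  "Xset k s = {x. (\<forall>i\<ge>k. x i = 0) \<and> (\<Sum>i<k. x i) = s}"

lemma finite_Xset: "finite (Xset k s)"
proof -
  have "Xset k s \<subseteq> {f. \<forall>x. (x \<in> {..<k} \<longrightarrow> f x \<in> {..s}) \<and> (x \<notin> {..<k} \<longrightarrow> f x = 0)}"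
  proof
    fix x assume x: "x \<in> Xset k s"
    then have "\<forall>i<k. x i \<le> s" unfolding Xset_def using member_le_sum[of _ "{..<k}" x] by fastforce
    then show "x \<in> {f. \<forall>x. (x \<in> {..<k} \<longrightarrow> f x \<in> {..s}) \<and> (x \<notin> {..<k} \<longrightarrow> f x = 0)}"
      using x unfolding Xset_def by auto
  qed
  then show ?thesis by (rule finite_subset) (intro finite_set_of_finite_funs; simp)
qed

lemma multinom:
  fixes r :: "nat \<Rightarrow> real"
  shows "(\<Sum>x\<in>Xset k s. \<Prod>i<k. r i ^ x i / fact (x i)) = (\<Sum>i<k. r i) ^ s / fact s"
proof (induction k arbitrary: s)
  case 0
  have "Xset 0 s = (if s = 0 then {\<lambda>_. 0} else {})" unfolding Xset_def by auto
  then show ?case by (cases s) auto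
next
  case (Suc k)
  define F where "F x = (\<Prod>i<k. r i ^ x i / fact (x i))" for x :: "nat \<Rightarrow> nat"
  define h where "h = (\<lambda>(j, y::nat\<Rightarrow>nat). y(k := j))"
  have bij: "bij_betw h (Sigma {..s} (\<lambda>j. Xset k (s - j))) (Xset (Suc k) s)"
  proof (rule bij_betwI[where g = "\<lambda>x. (x k, x(k := 0))"])
    show "h \<in> Sigma {..s} (\<lambda>j. Xset k (s - j)) \<rightarrow> Xset (Suc k) s"
    proof
      fix p assume "p \<in> Sigma {..s} (\<lambda>j. Xset k (s - j))"
      then obtain j y where p: "p = (j, y)" "j \<le> s" "y \<in> Xset k (s - j)" by auto
      have "(\<Sum>i<k. (y(k := j)) i) = (\<Sum>i<k. y i)" by (intro sum.cong) auto
      then show "h p \<in> Xset (Suc k) s" using p by (auto simp: h_def Xset_def)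
    qed
    show "(\<lambda>x. (x k, x(k := 0))) \<in> Xset (Suc k) s \<rightarrow> Sigma {..s} (\<lambda>j. Xset k (s - j))"
    proof
      fix x assume x: "x \<in> Xset (Suc k) s"
      have "(\<Sum>i<k. (x(k := 0)) i) = (\<Sum>i<k. x i)" by (intro sum.cong) auto
      then show "(x k, x(k := 0)) \<in> Sigma {..s} (\<lambda>j. Xset k (s - j))"
        using x by (auto simp: Xset_def)
    qed
    show "(h x k, (h x)(k := 0)) = x" if "x \<in> Sigma {..s} (\<lambda>j. Xset k (s - j))" for x
      using that by (auto simp: h_def Xset_def)
    show "h (y k, y(k := 0)) = y" for y by (simp add: h_def)
  qed
  have "(\<Sum>x\<in>Xset (Suc k) s. \<Prod>i<Suc k. r i ^ x i / fact (x i))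
      = (\<Sum>p\<in>Sigma {..s} (\<lambda>j. Xset k (s - j)). \<Prod>i<Suc k. r i ^ h p i / fact (h p i))"
    by (rule sum.reindex_bij_betw[OF bij, symmetric])
  also have "\<dots> = (\<Sum>j\<le>s. \<Sum>y\<in>Xset k (s - j). \<Prod>i<Suc k. r i ^ (y(k:=j)) i / fact ((y(k:=j)) i))"
  proof -
    have eq: "(\<lambda>p. \<Prod>i<Suc k. r i ^ h p i / fact (h p i)) = (\<lambda>(j,y). \<Prod>i<Suc k. r i ^ (y(k:=j)) i / fact ((y(k:=j)) i))"
      by (auto simp: h_def fun_eq_iff)
    show ?thesis unfolding eq by (rule sum.Sigma[symmetric]) (auto simp: finite_Xset)
  qed
  also have "\<dots> = (\<Sum>j\<le>s. \<Sum>y\<in>Xset k (s - j). r k ^ j / fact j * F y)"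
  proof (intro sum.cong refl)
    fix j y
    have "(\<Prod>i<k. r i ^ (y(k:=j)) i / fact ((y(k:=j)) i)) = F y"
      unfolding F_def by (intro prod.cong) auto
    then show "(\<Prod>i<Suc k. r i ^ (y(k:=j)) i / fact ((y(k:=j)) i)) = r k ^ j / fact j * F y"
      by (simp add: mult.commute)
  qed
  also have "\<dots> = (\<Sum>j\<le>s. r k ^ j / fact j * ((\<Sum>i<k. r i) ^ (s - j) / fact (s - j)))"
    by (intro sum.cong refl, subst sum_distrib_left[symmetric], unfold F_def, subst Suc.IH) (rule refl)
  also have "\<dots> = (\<Sum>j\<le>s. of_nat (s choose j) * r k ^ j * (\<Sum>i<k. r i) ^ (s - j)) / fact s"
    unfolding sum_divide_distrib
  proof (intro sum.cong refl)
    fix j assume "j \<in> {..s}"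
    then have "real (s choose j) = fact s / (fact j * fact (s - j))" by (simp add: binomial_fact)
    then show "r k ^ j / fact j * ((\<Sum>i<k. r i) ^ (s - j) / fact (s - j)) =
         of_nat (s choose j) * r k ^ j * (\<Sum>i<k. r i) ^ (s - j) / fact s"
      by (simp add: field_simps)
  qed
  also have "\<dots> = (r k + (\<Sum>i<k. r i)) ^ s / fact s"
    by (simp add: binomial_ring)
  finally show ?case by (simp add: add.commute)
qed

lemma Zsum:
  "(\<Sum>w\<in>states m k n. weight k n lam mu alpha beta u v theta w)
   = (\<Sum>b\<le>min n m. \<Sum>x\<le>m - b. (((\<Sum>i<k. lam i / mu i) ^ x / fact x) * (\<Prod>r<x + b. theta r))
        * qb n alpha beta u v b)"
proof -
  define S where "S = states m k n"
  define G where "G w = tcnt n (snd w)" for w :: "(nat \<Rightarrow> nat) \<times> (nat \<Rightarrow> act)"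
  define H where "H w = (\<Sum>i<k. fst w i)" for w :: "(nat \<Rightarrow> nat) \<times> (nat \<Rightarrow> act)"
  define f where "f = weight k n lam mu alpha beta u v theta"
  have busy: "busy k n w = H w + G w" for w unfolding busy_def H_def G_def tcnt_def by simp
  have SH: "S \<subseteq> (\<Union>s\<le>m. Xset k s) \<times> Aset n"
  proof
    fix w assume "w \<in> S"
    then show "w \<in> (\<Union>s\<le>m. Xset k s) \<times> Aset n"
      unfolding S_def states_def Xset_def Aset_def busy
      by (cases w) (auto simp: H_def)
  qed
  have finS: "finite S"
    by (rule finite_subset[OF SH]) (auto simp: finite_Xset finite_Aset)
  have "(\<Sum>w\<in>S. f w) = (\<Sum>b\<le>min n m. \<Sum>w\<in>{w\<in>S. G w = b}. f w)"
  proof (rule sum.group[symmetric, OF finS])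
    show "G ` S \<subseteq> {..min n m}"
    proof
      fix b assume "b \<in> G ` S"
      then obtain w where w: "w \<in> S" "b = G w" by auto
      then have "G w \<le> m" unfolding S_def states_def busy by auto
      moreover have "G w \<le> n" unfolding G_def by (rule tcnt_le)
      ultimately show "b \<in> {..min n m}" using w by auto
    qed
  qed simp
  also have "\<dots> = (\<Sum>b\<le>min n m. \<Sum>s\<le>m - b. \<Sum>w\<in>{w\<in>{w\<in>S. G w = b}. H w = s}. f w)"
  proof (intro sum.cong refl)
    fix b assume "b \<in> {..min n m}"
    show "(\<Sum>w\<in>{w\<in>S. G w = b}. f w) = (\<Sum>s\<le>m - b. \<Sum>w\<in>{w\<in>{w\<in>S. G w = b}. H w = s}. f w)"
    proof (rule sum.group[symmetric])
      show "finite {w\<in>S. G w = b}" using finS by simp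
      show "H ` {w\<in>S. G w = b} \<subseteq> {..m - b}"
        unfolding S_def states_def busy by auto
    qed simp
  qed
  also have "\<dots> = (\<Sum>b\<le>min n m. \<Sum>s\<le>m - b. (((\<Sum>i<k. lam i / mu i) ^ s / fact s) * (\<Prod>r<s + b. theta r))
        * qb n alpha beta u v b)"
  proof (intro sum.cong refl)
    fix b s assume b: "b \<in> {..min n m}" and s: "s \<in> {..m - b}"
    have set: "{w\<in>{w\<in>S. G w = b}. H w = s} = Xset k s \<times> {a\<in>Aset n. tcnt n a = b}"
      using b s unfolding S_def states_def busy by (auto simp: H_def G_def Xset_def Aset_def)
    have fw: "f (x, a) = (\<Prod>r<s + b. theta r) * (\<Prod>i<k. (lam i / mu i) ^ x i / fact (x i)) * WA n alpha beta u v a"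
      if "x \<in> Xset k s" "a \<in> {a\<in>Aset n. tcnt n a = b}" for x a
    proof -
      have "busy k n (x, a) = s + b" using that unfolding busy by (simp add: H_def G_def Xset_def)
      then show ?thesis unfolding f_def weight_def WA_def wf_def fst_conv snd_conv by simp
    qed
    have "(\<Sum>w\<in>{w\<in>{w\<in>S. G w = b}. H w = s}. f w)
        = (\<Sum>x\<in>Xset k s. \<Sum>a\<in>{a\<in>Aset n. tcnt n a = b}. f (x, a))"
      unfolding set sum.cartesian_product by (simp add: case_prod_beta)
    also have "\<dots> = (\<Sum>x\<in>Xset k s. \<Sum>a\<in>{a\<in>Aset n. tcnt n a = b}.
         (\<Prod>r<s + b. theta r) * (\<Prod>i<k. (lam i / mu i) ^ x i / fact (x i)) * WA n alpha beta u v a)"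
      by (intro sum.cong refl fw) 
    also have "\<dots> = (\<Prod>r<s + b. theta r) * (\<Sum>x\<in>Xset k s. \<Prod>i<k. (lam i / mu i) ^ x i / fact (x i))
        * qb n alpha beta u v b"
    proof -
      have "(\<Prod>r<s + b. theta r) * (\<Sum>x\<in>Xset k s. \<Prod>i<k. (lam i / mu i) ^ x i / fact (x i))
        * qb n alpha beta u v b = (\<Prod>r<s + b. theta r) * ((\<Sum>x\<in>Xset k s. \<Prod>i<k. (lam i / mu i) ^ x i / fact (x i))
        * (\<Sum>a\<in>{a\<in>Aset n. tcnt n a = b}. WA n alpha beta u v a))"
        by (simp add: qb_def mult.assoc)
      also have "\<dots> = (\<Prod>r<s + b. theta r) * (\<Sum>x\<in>Xset k s. \<Sum>a\<in>{a\<in>Aset n. tcnt n a = b}.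
         (\<Prod>i<k. (lam i / mu i) ^ x i / fact (x i)) * WA n alpha beta u v a)"
        by (simp only: sum_product)
      also have "\<dots> = (\<Sum>x\<in>Xset k s. \<Sum>a\<in>{a\<in>Aset n. tcnt n a = b}.
         (\<Prod>r<s + b. theta r) * (\<Prod>i<k. (lam i / mu i) ^ x i / fact (x i)) * WA n alpha beta u v a)"
        by (simp only: sum_distrib_left mult.assoc)
      finally show ?thesis by (rule sym)
    qed
    also have "\<dots> = (((\<Sum>i<k. lam i / mu i) ^ s / fact s) * (\<Prod>r<s + b. theta r)) * qb n alpha beta u v b"
      by (simp add: multinom)
    finally show "(\<Sum>w\<in>{w\<in>{w\<in>S. G w = b}. H w = s}. f w) =
        (((\<Sum>i<k. lam i / mu i) ^ s / fact s) * (\<Prod>r<s + b. theta r)) * qb n alpha beta u v b" .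
  qed
  finally show ?thesis unfolding S_def f_def .
qed

theorem lemma1:
  fixes m k n :: nat and lam mu alpha beta u v theta :: "nat \<Rightarrow> real"
    and B Bt :: real and p pt :: "(nat \<Rightarrow> nat) \<times> (nat \<Rightarrow> act) \<Rightarrow> real"
  assumes "m \<ge> 1" "k \<ge> 1" "n \<ge> 1"
    and "\<forall>i<k. lam i > 0 \<and> mu i > 0"
    and "\<forall>j<n. alpha j > 0 \<and> beta j > 0 \<and> u j > 0 \<and> v j > 0"
    and "\<forall>b\<le>m. 0 \<le> theta b \<and> theta b \<le> 1"
    and "\<forall>b<m. theta b > 0" and "theta m = 0"
    and "\<forall>w\<in>states m k n. p w = B * weight k n lam mu alpha beta u v theta w"
    and "(\<Sum>w\<in>states m k n. p w) = 1"
    and "\<forall>w\<in>states m 0 n. pt w = Bt * weight 0 n lam mu alpha beta u v theta w"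
    and "(\<Sum>w\<in>states m 0 n. pt w) = 1"
  shows "complex_of_real B = 1 / (\<Sum>b\<le>min n m. \<Sum>x\<le>m - b.
            of_real (((\<Sum>i<k. lam i / mu i) ^ x / fact x) * (\<Prod>r<x + b. theta r))
            * c_coef n alpha beta u v b)
     \<and> complex_of_real Bt = 1 / (\<Sum>b\<le>min n m. of_real (\<Prod>r<b. theta r) * c_coef n alpha beta u v b)"
proof -
  note a = assms
  define Z where "Z = (\<Sum>w\<in>states m k n. weight k n lam mu alpha beta u v theta w)"
  define Zt where "Zt = (\<Sum>w\<in>states m 0 n. weight 0 n lam mu alpha beta u v theta w)"
  have "(\<Sum>w\<in>states m k n. p w) = B * Z"
    unfolding Z_def sum_distrib_left using a(9) by (intro sum.cong) auto
  then have BZ: "B * Z = 1" using a(10) by simp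
  have "(\<Sum>w\<in>states m 0 n. pt w) = Bt * Zt"
    unfolding Zt_def sum_distrib_left using a(11) by (intro sum.cong) auto
  then have BZt: "Bt * Zt = 1" using a(12) by simp
  have cZ: "(\<Sum>b\<le>min n m. \<Sum>x\<le>m - b.
            complex_of_real (((\<Sum>i<k. lam i / mu i) ^ x / fact x) * (\<Prod>r<x + b. theta r))
            * c_coef n alpha beta u v b) = complex_of_real Z"
    unfolding Z_def Zsum of_real_sum of_real_mult
    by (intro sum.cong refl) (simp add: c_coef_eq)
  have Zt: "Zt = (\<Sum>b\<le>min n m. (\<Prod>r<b. theta r) * qb n alpha beta u v b)"
    unfolding Zt_def Zsum
  proof (intro sum.cong refl)
    fix b
    have "(\<Sum>x\<le>m - b. (((\<Sum>i<0. lam i / mu i) ^ x / fact x) * (\<Prod>r<x + b. theta r)) * qb n alpha beta u v b)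
       = (\<Sum>x\<le>m - b. if x = 0 then (\<Prod>r<b. theta r) * qb n alpha beta u v b else 0)"
      by (intro sum.cong refl) (simp add: power_0_left)
    also have "\<dots> = (\<Prod>r<b. theta r) * qb n alpha beta u v b"
      by simp
    finally show "(\<Sum>x\<le>m - b. (((\<Sum>i<0. lam i / mu i) ^ x / fact x) * (\<Prod>r<x + b. theta r)) * qb n alpha beta u v b)
       = (\<Prod>r<b. theta r) * qb n alpha beta u v b" .
  qed
  have cZt: "(\<Sum>b\<le>min n m. of_real (\<Prod>r<b. theta r) * c_coef n alpha beta u v b) = complex_of_real Zt"
    unfolding Zt of_real_sum of_real_mult
    by (intro sum.cong refl) (simp add: c_coef_eq)
  have "Z \<noteq> 0" using BZ by auto
  then have "B = 1 / Z" using BZ by (simp add: eq_divide_eq)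
  moreover have "Zt \<noteq> 0" using BZt by auto
  then have "Bt = 1 / Zt" using BZt by (simp add: eq_divide_eq)
  ultimately show ?thesis unfolding cZ cZt by simp
qed

end
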